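(* Suppose the random walk $R$ is irreducible, aperiodic, positive recurrent and has negative drift. For $i=1,\dots,M$ let $r_i$ satisfy $$1<r_i<\inf_{n\in S:\, i\in I(n)}\frac{s^-_i(n)}{s^+_i(n)}$$ (such $r_i$ exist, i.e. the infimum is finite and strictly greater than $1$). Let $\varepsilon^*=\min_{n\in S,\, i\in I(n)}\{s^+_i(n)(1-r_i)+s^-_i(n)(1-r_i^{-1})\}$ (then $\varepsilon^*>0$). Let $v_0\ge1$, $v_1,\dots,v_M>0$, $0<\varepsilon<\varepsilon^*$, and define $$V(n)=v_0+\sum_{i=1}^M v_i r_i^{n_i},\qquad b=\varepsilon v_0+\sum_{i=1}^M v_i\Big(\sup_{n\in S}s^+_i(n)\,(r_i-1)+\varepsilon\Big),$$ $$B=\Big\{n\in S:\ n_i\le \max\Big\{\tfrac{\log(b/v_i)-\log(\varepsilon^*-\varepsilon)}{\log r_i},\,1\Big\}\ \ \forall i=1,\dots,M\Big\}.$$ Then $V:S\to[1,\infty)$, $B$ is finite, $b>0$, and for all $n\in S$, $$\sum_{u\in N_{c(n)}}p_{c(n),u}V(n+u)-V(n)\le-\varepsilon V(n)+b\,\mathbf 1_B(n),$$ i.e. $R$ is geometrically ergodic with these $V,\varepsilon,b,B$.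
   Context: Let $M\ge 1$ and $S=\{0,1,2,\dots\}^M$. For $n\in S$ let $N(n)=\{u\in\{-1,0,1\}^M: n+u\in S\}$. A partition $C=\{C_k\}_{k\in K}$ ($K$ finite) of $S$ is a family of pairwise disjoint sets covering $S$ such that $N(n)=N(n')$ whenever $n,n'$ lie in the same $C_k$; write $N_k$ for this common set and $c(n)$ for the index $k$ with $n\in C_k$. The random walk $R$ is a discrete-time Markov chain on $S$ with transition probabilities $P(n,n+u)=p_{c(n),u}\ge0$ for $u\in N_{c(n)}$, $P(n,m)=0$ if $m-n\notin N_{c(n)}$, and $\sum_{u\in N_k}p_{k,u}=1$ for every $k$. For $n\in S$, $I(n)=\{i\in\{1,\dots,M\}: n_i>0\}$, $s^+_i(n)=\sum_{u\in N_{c(n)}:u_i=1}p_{c(n),u}$ and $s^-_i(n)=\sum_{u\in N_{c(n)}:u_i=-1}p_{c(n),u}$ (a ratio $s^-_i(n)/s^+_i(n)$ with $s^+_i(n)=0$ is interpreted as $+\infty$). $R$ has negative drift if $\sup_{n\in S,\,i\in I(n)}\{s^+_i(n)-s^-_i(n)\}<0$. *)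

theory Defs
  imports "HOL-Analysis.Analysis"
begin

text \<open>States: vectors indexed by a finite type 'm (so M = CARD('m) \<ge> 1),
  with integer entries; the state space S consists of the nonnegative ones.
  Classes of the partition are indexed by a type 'k; c is the class map.
  p k u is the probability of jumping by u from a state of class k.\<close>

type_synonym 'm state = "'m \<Rightarrow> int"

definition St :: "'m state set" where
  "St = {n. \<forall>i. 0 \<le> n i}"

definition addv :: "'m state \<Rightarrow> 'm state \<Rightarrow> 'm state" where
  "addv n u = (\<lambda>i. n i + u i)"

definition Ustep :: "'m state set" where
  "Ustep = {u. \<forall>i. u i \<in> {-1, 0, 1}}"

definition Nb :: "'m state \<Rightarrow> 'm state set" where
  "Nb n = {u \<in> Ustep. addv n u \<in> St}"

definition Iset :: "'m state \<Rightarrow> 'm set" where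
  "Iset n = {i. n i > 0}"

definition is_partition :: "('m state \<Rightarrow> 'k) \<Rightarrow> bool" where
  "is_partition c \<longleftrightarrow> finite (c ` St) \<and>
     (\<forall>n\<in>St. \<forall>n'\<in>St. c n = c n' \<longrightarrow> Nb n = Nb n')"

definition is_walk :: "('m state \<Rightarrow> 'k) \<Rightarrow> ('k \<Rightarrow> 'm state \<Rightarrow> real) \<Rightarrow> bool" where
  "is_walk c p \<longleftrightarrow> is_partition c \<and>
     (\<forall>n\<in>St. (\<forall>u\<in>Nb n. 0 \<le> p (c n) u) \<and> (\<Sum>u\<in>Nb n. p (c n) u) = 1)"

definition Ptrans :: "('m state \<Rightarrow> 'k) \<Rightarrow> ('k \<Rightarrow> 'm state \<Rightarrow> real) \<Rightarrow> 'm state \<Rightarrow> 'm state \<Rightarrow> real" where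
  "Ptrans c p x y = (\<Sum>u\<in>Nb x. if addv x u = y then p (c x) u else 0)"

fun Pt :: "('m state \<Rightarrow> 'k) \<Rightarrow> ('k \<Rightarrow> 'm state \<Rightarrow> real) \<Rightarrow> nat \<Rightarrow> 'm state \<Rightarrow> 'm state \<Rightarrow> real" where
  "Pt c p 0 x y = (if x = y then 1 else 0)"
| "Pt c p (Suc t) x y = (\<Sum>u\<in>Nb x. p (c x) u * Pt c p t (addv x u) y)"

text \<open>First-passage probabilities: F t x y = probability that the walk started
  at x visits y for the first time (at a positive time) at time t.\<close>
fun Fp :: "('m state \<Rightarrow> 'k) \<Rightarrow> ('k \<Rightarrow> 'm state \<Rightarrow> real) \<Rightarrow> nat \<Rightarrow> 'm state \<Rightarrow> 'm state \<Rightarrow> real" where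
  "Fp c p 0 x y = 0"
| "Fp c p (Suc t) x y =
     (\<Sum>u\<in>Nb x. p (c x) u *
        (if addv x u = y then (if t = 0 then 1 else 0) else Fp c p t (addv x u) y))"

definition irreducible :: "('m state \<Rightarrow> 'k) \<Rightarrow> ('k \<Rightarrow> 'm state \<Rightarrow> real) \<Rightarrow> bool" where
  "irreducible c p \<longleftrightarrow> (\<forall>x\<in>St. \<forall>y\<in>St. \<exists>t. Pt c p t x y > 0)"

definition aperiodic :: "('m state \<Rightarrow> 'k) \<Rightarrow> ('k \<Rightarrow> 'm state \<Rightarrow> real) \<Rightarrow> bool" where
  "aperiodic c p \<longleftrightarrow> (\<forall>x\<in>St. Gcd {t::nat. t > 0 \<and> Pt c p t x x > 0} = 1)"

definition positive_recurrent :: "('m state \<Rightarrow> 'k) \<Rightarrow> ('k \<Rightarrow> 'm state \<Rightarrow> real) \<Rightarrow> bool" where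
  "positive_recurrent c p \<longleftrightarrow>
     (\<forall>x\<in>St. (\<lambda>t. Fp c p t x x) sums 1 \<and> summable (\<lambda>t. real t * Fp c p t x x))"

definition s_plus :: "('m state \<Rightarrow> 'k) \<Rightarrow> ('k \<Rightarrow> 'm state \<Rightarrow> real) \<Rightarrow> 'm \<Rightarrow> 'm state \<Rightarrow> real" where
  "s_plus c p i n = (\<Sum>u\<in>{u\<in>Nb n. u i = 1}. p (c n) u)"

definition s_minus :: "('m state \<Rightarrow> 'k) \<Rightarrow> ('k \<Rightarrow> 'm state \<Rightarrow> real) \<Rightarrow> 'm \<Rightarrow> 'm state \<Rightarrow> real" where
  "s_minus c p i n = (\<Sum>u\<in>{u\<in>Nb n. u i = -1}. p (c n) u)"

definition negative_drift :: "('m state \<Rightarrow> 'k) \<Rightarrow> ('k \<Rightarrow> 'm state \<Rightarrow> real) \<Rightarrow> bool" where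
  "negative_drift c p \<longleftrightarrow>
     Sup {s_plus c p i n - s_minus c p i n | n i. n \<in> St \<and> i \<in> Iset n} < 0"

definition ratio :: "('m state \<Rightarrow> 'k) \<Rightarrow> ('k \<Rightarrow> 'm state \<Rightarrow> real) \<Rightarrow> 'm \<Rightarrow> 'm state \<Rightarrow> ereal" where
  "ratio c p i n = (if s_plus c p i n = 0 then \<infinity>
                    else ereal (s_minus c p i n / s_plus c p i n))"

definition eps_star :: "('m state \<Rightarrow> 'k) \<Rightarrow> ('k \<Rightarrow> 'm state \<Rightarrow> real) \<Rightarrow> ('m \<Rightarrow> real) \<Rightarrow> real" where
  "eps_star c p r = Min {s_plus c p i n * (1 - r i) + s_minus c p i n * (1 - 1 / r i)
                         | n i. n \<in> St \<and> i \<in> Iset n}"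

definition Vfun :: "real \<Rightarrow> ('m \<Rightarrow> real) \<Rightarrow> ('m \<Rightarrow> real) \<Rightarrow> 'm state \<Rightarrow> real" where
  "Vfun v0 v r n = v0 + (\<Sum>i\<in>UNIV. v i * r i ^ nat (n i))"

definition bconst :: "('m state \<Rightarrow> 'k) \<Rightarrow> ('k \<Rightarrow> 'm state \<Rightarrow> real) \<Rightarrow> ('m \<Rightarrow> real) \<Rightarrow>
    real \<Rightarrow> ('m \<Rightarrow> real) \<Rightarrow> real \<Rightarrow> real" where
  "bconst c p r v0 v \<epsilon> = \<epsilon> * v0 +
     (\<Sum>i\<in>UNIV. v i * (Sup {s_plus c p i n * (r i - 1) | n. n \<in> St} + \<epsilon>))"

definition Bset :: "('m state \<Rightarrow> 'k) \<Rightarrow> ('k \<Rightarrow> 'm state \<Rightarrow> real) \<Rightarrow> ('m \<Rightarrow> real) \<Rightarrow>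
    real \<Rightarrow> ('m \<Rightarrow> real) \<Rightarrow> real \<Rightarrow> 'm state set" where
  "Bset c p r v0 v \<epsilon> = {n \<in> St. \<forall>i. real_of_int (n i) \<le>
      max ((ln (bconst c p r v0 v \<epsilon> / v i) - ln (eps_star c p r - \<epsilon>)) / ln (r i)) 1}"

end

theory Submission
  imports Defs
begin

lemma fin_funs:
  assumes "finite (A::'b set)"
  shows "finite {f::('m::finite) \<Rightarrow> 'b. \<forall>i. f i \<in> A}"
proof -
  have "{f::'m \<Rightarrow> 'b. \<forall>i. f i \<in> A} = Pi\<^sub>E UNIV (\<lambda>_. A)"
    by (auto simp: PiE_UNIV_domain Pi_def)
  thus ?thesis using finite_PiE[OF finite_class.finite_UNIV, of "\<lambda>_. A"] assms by simp
qed

lemma finite_Ustep: "finite (Ustep :: ('m::finite) state set)"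
  unfolding Ustep_def using fin_funs[of "{-1,0,1::int}"] by simp

lemma finite_Nb: "finite (Nb (n :: ('m::finite) state))"
  unfolding Nb_def using finite_Ustep by (rule rev_finite_subset) auto

lemma fin_class:
  assumes "finite (c ` A)" "\<forall>n\<in>A. \<forall>n'\<in>A. c n = c n' \<longrightarrow> G n = G n'"
  shows "finite (G ` A)"
proof -
  have "G ` A \<subseteq> (\<lambda>k. G (SOME n. n \<in> A \<and> c n = k)) ` (c ` A)"
  proof
    fix x assume "x \<in> G ` A"
    then obtain n where n: "n \<in> A" "x = G n" by auto
    have "\<exists>m. m \<in> A \<and> c m = c n" using n by auto
    hence "(SOME m. m \<in> A \<and> c m = c n) \<in> A \<and> c (SOME m. m \<in> A \<and> c m = c n) = c n"
      by (rule someI_ex)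
    hence "G (SOME m. m \<in> A \<and> c m = c n) = G n" using assms(2) n by metis
    thus "x \<in> (\<lambda>k. G (SOME n. n \<in> A \<and> c n = k)) ` (c ` A)" using n by force
  qed
  thus ?thesis using assms(1) by (rule finite_subset[OF _ finite_imageI])
qed

lemma s_class:
  assumes "is_partition c" "n \<in> St" "n' \<in> St" "c n = c n'"
  shows "s_plus c p i n = s_plus c p i n'" "s_minus c p i n = s_minus c p i n'"
proof -
  have "Nb n = Nb n'" using assms unfolding is_partition_def by blast
  thus "s_plus c p i n = s_plus c p i n'" "s_minus c p i n = s_minus c p i n'"
    unfolding s_plus_def s_minus_def using assms(4) by simp_all
qed

lemma pow_step:
  fixes r :: real
  assumes "0 < r" "0 \<le> a" "0 \<le> a + d" "d \<in> {-1,0,1}"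
  shows "r ^ nat (a + d) = r ^ nat a * (if d = 1 then r else if d = -1 then 1 / r else 1)"
proof -
  consider "d = -1" | "d = 0" | "d = 1" using assms(4) by auto
  thus ?thesis
  proof cases
    case 1
    hence "nat a = Suc (nat (a + d))" using assms by auto
    thus ?thesis using 1 assms(1) by simp
  next
    case 3
    hence "nat (a + d) = Suc (nat a)" using assms by auto
    thus ?thesis using 3 by simp
  qed simp
qed

lemma sum_step:
  fixes P :: "('m::finite) state \<Rightarrow> real"
  assumes n: "n \<in> St" and r: "0 < r"
  shows "(\<Sum>u\<in>Nb n. P u * r ^ nat (n i + u i)) = r ^ nat (n i) *
     ((\<Sum>u\<in>Nb n. P u) + (r - 1) * (\<Sum>u\<in>{u\<in>Nb n. u i = 1}. P u)
       + (1 / r - 1) * (\<Sum>u\<in>{u\<in>Nb n. u i = -1}. P u))"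
proof -
  have "(\<Sum>u\<in>Nb n. P u * r ^ nat (n i + u i)) = (\<Sum>u\<in>Nb n. r ^ nat (n i) *
     (P u + (if u i = 1 then P u * (r - 1) else 0) + (if u i = -1 then P u * (1 / r - 1) else 0)))"
  proof (rule sum.cong[OF refl])
    fix u assume u: "u \<in> Nb n"
    hence "u i \<in> {-1,0,1}" "0 \<le> n i + u i" "0 \<le> n i"
      using n unfolding Nb_def Ustep_def St_def addv_def by auto
    from pow_step[OF r this(3,2,1)]
    show "P u * r ^ nat (n i + u i) = r ^ nat (n i) *
     (P u + (if u i = 1 then P u * (r - 1) else 0) + (if u i = -1 then P u * (1 / r - 1) else 0))"
      by (auto simp: algebra_simps)
  qed
  also have "\<dots> = r ^ nat (n i) * ((\<Sum>u\<in>Nb n. P u) + (\<Sum>u\<in>Nb n. if u i = 1 then P u * (r - 1) else 0)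
     + (\<Sum>u\<in>Nb n. if u i = -1 then P u * (1 / r - 1) else 0))"
    by (subst sum_distrib_left[symmetric]) (simp add: sum.distrib)
  also have "\<dots> = r ^ nat (n i) *
     ((\<Sum>u\<in>Nb n. P u) + (r - 1) * (\<Sum>u\<in>{u\<in>Nb n. u i = 1}. P u)
       + (1 / r - 1) * (\<Sum>u\<in>{u\<in>Nb n. u i = -1}. P u))"
  proof -
    have "(\<Sum>u\<in>Nb n. if u i = 1 then P u * (r - 1) else 0) = (\<Sum>u\<in>{u\<in>Nb n. u i = 1}. P u) * (r - 1)"
      by (auto simp: sum_distrib_right sum.inter_filter[OF finite_Nb] intro!: sum.cong)
    moreover have "(\<Sum>u\<in>Nb n. if u i = -1 then P u * (1 / r - 1) else 0) = (\<Sum>u\<in>{u\<in>Nb n. u i = -1}. P u) * (1 / r - 1)"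
      by (auto simp: sum_distrib_right sum.inter_filter[OF finite_Nb] intro!: sum.cong)
    ultimately show ?thesis by (simp add: mult.commute)
  qed
  finally show ?thesis .
qed

theorem lemma4p2:
  fixes c :: "('m::finite) state \<Rightarrow> 'k"
    and p :: "'k \<Rightarrow> 'm state \<Rightarrow> real"
    and r v :: "'m \<Rightarrow> real"
    and v0 \<epsilon> :: real
  assumes walk: "is_walk c p"
    and irr: "irreducible c p"
    and aper: "aperiodic c p"
    and posrec: "positive_recurrent c p"
    and drift: "negative_drift c p"
    and r_gt1: "\<forall>i. 1 < r i"
    and r_lt: "\<forall>i. ereal (r i) < (INF n\<in>{n\<in>St. i \<in> Iset n}. ratio c p i n)"
    and v0: "1 \<le> v0"
    and vpos: "\<forall>i. 0 < v i"
    and eps: "0 < \<epsilon>" "\<epsilon> < eps_star c p r"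
  shows "0 < eps_star c p r
     \<and> (\<forall>n\<in>St. 1 \<le> Vfun v0 v r n)
     \<and> finite (Bset c p r v0 v \<epsilon>)
     \<and> 0 < bconst c p r v0 v \<epsilon>
     \<and> (\<forall>n\<in>St. (\<Sum>u\<in>Nb n. p (c n) u * Vfun v0 v r (addv n u)) - Vfun v0 v r n
              \<le> - \<epsilon> * Vfun v0 v r n
                 + bconst c p r v0 v \<epsilon> * indicator (Bset c p r v0 v \<epsilon>) n)"
proof -
  let ?E = "eps_star c p r"
  let ?b = "bconst c p r v0 v \<epsilon>"
  let ?B = "Bset c p r v0 v \<epsilon>"
  let ?V = "Vfun v0 v r"
  define Sp where "Sp i = Sup {s_plus c p i n * (r i - 1) | n. n \<in> St}" for i
  define w where "w i = v i * (Sp i + \<epsilon>)" for i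
  have part: "is_partition c" using walk unfolding is_walk_def by auto
  have fincl: "finite (c ` St)" using part unfolding is_partition_def by auto
  have pnn: "\<And>n u. n \<in> St \<Longrightarrow> u \<in> Nb n \<Longrightarrow> 0 \<le> p (c n) u"
   and psum: "\<And>n. n \<in> St \<Longrightarrow> (\<Sum>u\<in>Nb n. p (c n) u) = 1"
    using walk unfolding is_walk_def by auto
  have sp_nn: "\<And>i n. n \<in> St \<Longrightarrow> 0 \<le> s_plus c p i n"
    unfolding s_plus_def by (rule sum_nonneg) (auto intro: pnn)
  have zeroSt: "(\<lambda>_. 0) \<in> St" unfolding St_def by auto
  have finSp: "finite {s_plus c p i n * (r i - 1) | n. n \<in> St}" for i
  proof -
    have "{s_plus c p i n * (r i - 1) | n. n \<in> St} = (\<lambda>n. s_plus c p i n * (r i - 1)) ` St" by auto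
    moreover have "finite ((\<lambda>n. s_plus c p i n * (r i - 1)) ` St)" (is "finite (?F ` _)")
    proof (rule fin_class[OF fincl], intro ballI impI)
      fix n n' assume "n \<in> St" "n' \<in> St" "c n = c n'"
      from s_class[OF part this, of p i] show "?F n = ?F n'" by simp
    qed
    ultimately show ?thesis by simp
  qed
  have Sp_ge: "\<And>i n. n \<in> St \<Longrightarrow> s_plus c p i n * (r i - 1) \<le> Sp i"
    unfolding Sp_def by (rule cSup_upper) (auto intro: bdd_above_finite[OF finSp])
  have Sp_nn: "0 \<le> Sp i" for i
  proof -
    have "0 \<le> s_plus c p i (\<lambda>_. 0) * (r i - 1)"
      using sp_nn[OF zeroSt, of i] r_gt1 by (simp add: less_imp_le)
    thus ?thesis using Sp_ge[OF zeroSt, of i] by linarith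
  qed
  have w_pos: "0 < w i" for i unfolding w_def using vpos Sp_nn eps by (simp add: add_nonneg_pos)
  have finE: "finite {s_plus c p i n * (1 - r i) + s_minus c p i n * (1 - 1 / r i) | n i. n \<in> St \<and> i \<in> Iset n}"
  proof -
    have "{s_plus c p i n * (1 - r i) + s_minus c p i n * (1 - 1 / r i) | n i. n \<in> St \<and> i \<in> Iset n}
      \<subseteq> (\<Union>i. (\<lambda>n. s_plus c p i n * (1 - r i) + s_minus c p i n * (1 - 1 / r i)) ` St)" by auto
    moreover have "finite ((\<lambda>n. s_plus c p i n * (1 - r i) + s_minus c p i n * (1 - 1 / r i)) ` St)" (is "finite (?F ` _)") for i
    proof (rule fin_class[OF fincl], intro ballI impI)
      fix n n' assume "n \<in> St" "n' \<in> St" "c n = c n'"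
      from s_class[OF part this, of p i] show "?F n = ?F n'" by simp
    qed
    ultimately show ?thesis by (meson finite_UN_I finite_class.finite_UNIV finite_subset)
  qed
  have E_le: "\<And>n i. n \<in> St \<Longrightarrow> i \<in> Iset n \<Longrightarrow> ?E \<le> s_plus c p i n * (1 - r i) + s_minus c p i n * (1 - 1 / r i)"
    unfolding eps_star_def by (rule Min_le[OF finE]) auto
  have bdef: "?b = \<epsilon> * v0 + (\<Sum>i\<in>UNIV. w i)"
    unfolding bconst_def w_def Sp_def by simp
  have bpos: "0 < ?b"
  proof -
    have "0 < (\<Sum>i\<in>UNIV. w i)" by (rule sum_pos) (auto simp: w_pos)
    moreover have "0 < \<epsilon> * v0" using eps v0 by simp
    ultimately show ?thesis unfolding bdef by simp
  qed
  have Vge: "\<forall>n\<in>St. 1 \<le> ?V n"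
  proof
    fix n :: "'m state"
    have "0 \<le> (\<Sum>i\<in>UNIV. v i * r i ^ nat (n i))"
      using vpos r_gt1 by (intro sum_nonneg mult_nonneg_nonneg zero_le_power) (auto intro: less_imp_le less_trans[OF zero_less_one])
    thus "1 \<le> ?V n" unfolding Vfun_def using v0 by simp
  qed
  define L where "L i = max ((ln (?b / v i) - ln (?E - \<epsilon>)) / ln (r i)) 1" for i
  have Bdef: "?B = {n \<in> St. \<forall>i. real_of_int (n i) \<le> L i}" unfolding Bset_def L_def by simp
  have finB: "finite ?B"
  proof -
    define Mx where "Mx = Max (range L)"
    have "?B \<subseteq> {f. \<forall>i. f i \<in> {0..\<lfloor>Mx\<rfloor>}}"
    proof safe
      fix f i assume "f \<in> ?B"
      hence "f \<in> St" "real_of_int (f i) \<le> L i" unfolding Bdef by auto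
      moreover have "L i \<le> Mx" unfolding Mx_def by (rule Max_ge) auto
      ultimately show "f i \<in> {0..\<lfloor>Mx\<rfloor>}" unfolding St_def by (auto simp: le_floor_iff)
    qed
    thus ?thesis using fin_funs[of "{0..\<lfloor>Mx\<rfloor>}"] by (auto intro: finite_subset)
  qed
  have main: "(\<Sum>u\<in>Nb n. p (c n) u * ?V (addv n u)) - ?V n
              \<le> - \<epsilon> * ?V n + ?b * indicator ?B n" if n: "n \<in> St" for n
  proof -
    let ?P = "p (c n)"
    define g where "g i = s_plus c p i n * (r i - 1) + s_minus c p i n * (1 / r i - 1)" for i
    define h where "h i = v i * r i ^ nat (n i) * (g i + \<epsilon>)" for i
    have "(\<Sum>u\<in>Nb n. ?P u * ?V (addv n u)) =
       (\<Sum>u\<in>Nb n. ?P u * v0 + (\<Sum>i\<in>UNIV. v i * (?P u * r i ^ nat (n i + u i))))"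
      unfolding Vfun_def addv_def by (simp add: algebra_simps sum_distrib_left)
    also have "\<dots> = v0 + (\<Sum>i\<in>UNIV. v i * (\<Sum>u\<in>Nb n. ?P u * r i ^ nat (n i + u i)))"
    proof -
      have "(\<Sum>u\<in>Nb n. ?P u * v0) = v0" using psum[OF n] by (simp add: sum_distrib_right[symmetric])
      moreover have "(\<Sum>u\<in>Nb n. \<Sum>i\<in>UNIV. v i * (?P u * r i ^ nat (n i + u i)))
          = (\<Sum>i\<in>UNIV. \<Sum>u\<in>Nb n. v i * (?P u * r i ^ nat (n i + u i)))"
        by (rule sum.swap)
      ultimately show ?thesis by (simp add: sum.distrib sum_distrib_left)
    qed
    also have "\<dots> = v0 + (\<Sum>i\<in>UNIV. v i * (r i ^ nat (n i) * (1 + g i)))"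
      unfolding sum_step[OF n less_trans[OF zero_less_one r_gt1[rule_format]]] psum[OF n] g_def
        s_plus_def s_minus_def by (simp add: algebra_simps)
    finally have "(\<Sum>u\<in>Nb n. ?P u * ?V (addv n u)) - ?V n + \<epsilon> * ?V n = \<epsilon> * v0 + (\<Sum>i\<in>UNIV. h i)"
      unfolding Vfun_def h_def by (simp add: algebra_simps sum.distrib sum_distrib_left)
    moreover have hI: "h i \<le> - (v i * r i ^ nat (n i) * (?E - \<epsilon>))" if "i \<in> Iset n" for i
    proof -
      have "g i \<le> - ?E" using E_le[OF n that] r_gt1 unfolding g_def by (simp add: algebra_simps)
      moreover have "0 < v i * r i ^ nat (n i)" using vpos r_gt1 by (simp add: less_trans[OF zero_less_one])
      hence "v i * r i ^ nat (n i) * (g i + \<epsilon>) \<le> v i * r i ^ nat (n i) * (- ?E + \<epsilon>)"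
        using \<open>g i \<le> - ?E\<close> by (intro mult_left_mono) auto
      thus ?thesis unfolding h_def by (simp add: algebra_simps)
    qed
    moreover have hw: "h i \<le> w i" for i
    proof (cases "i \<in> Iset n")
      case True
      have "0 < v i * r i ^ nat (n i)" using vpos r_gt1 by (simp add: less_trans[OF zero_less_one])
      hence "0 \<le> v i * r i ^ nat (n i) * (?E - \<epsilon>)" using eps by simp
      hence "h i \<le> 0" using hI[OF True] by linarith
      thus ?thesis using w_pos[of i] by simp
    next
      case False
      have "0 \<le> n i" using n unfolding St_def by auto
      hence n0: "n i = 0" using False unfolding Iset_def by simp
      have "{u\<in>Nb n. u i = -1} = {}"
      proof (rule ccontr)
        assume "{u\<in>Nb n. u i = -1} \<noteq> {}"
        then obtain u where u: "u \<in> Nb n" "u i = -1" by blast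
        hence "addv n u \<in> St" unfolding Nb_def by simp
        hence "0 \<le> n i + u i" unfolding St_def addv_def by simp
        thus False using u n0 by simp
      qed
      hence "s_minus c p i n = 0" unfolding s_minus_def by (simp only: sum.empty)
      hence "g i \<le> Sp i" using Sp_ge[OF n, of i] unfolding g_def by simp
      thus ?thesis unfolding h_def w_def using n0 vpos by (simp add: mult_left_mono)
    qed
    moreover have "\<epsilon> * v0 + (\<Sum>i\<in>UNIV. h i) \<le> ?b * indicator ?B n"
    proof (cases "n \<in> ?B")
      case True
      have "(\<Sum>i\<in>UNIV. h i) \<le> (\<Sum>i\<in>UNIV. w i)" by (rule sum_mono[OF hw])
      thus ?thesis using True unfolding bdef by simp
    next
      case False
      then obtain j where j: "L j < real_of_int (n j)" using n unfolding Bdef by (auto simp: not_le)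
      hence nj: "1 < real_of_int (n j)" unfolding L_def by simp
      hence jI: "j \<in> Iset n" unfolding Iset_def by simp
      have Eeps: "0 < ?E - \<epsilon>" using eps by simp
      have lr: "0 < ln (r j)" using r_gt1 by (simp add: ln_gt_zero)
      have rj: "0 < r j" using r_gt1 by (simp add: less_trans[OF zero_less_one])
      have "(ln (?b / v j) - ln (?E - \<epsilon>)) / ln (r j) < real_of_int (n j)" using j unfolding L_def by simp
      hence "ln (?b / v j) - ln (?E - \<epsilon>) < real_of_int (n j) * ln (r j)"
        using lr by (simp add: divide_less_eq)
      also have "real_of_int (n j) * ln (r j) = ln (r j ^ nat (n j))"
        using nj rj by (simp add: ln_realpow)
      finally have "ln (?b / v j) < ln (r j ^ nat (n j) * (?E - \<epsilon>))"
        using Eeps rj by (simp add: ln_mult)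
      hence "?b / v j < r j ^ nat (n j) * (?E - \<epsilon>)"
        using bpos vpos Eeps rj by (subst (asm) ln_less_cancel_iff) auto
      hence "?b < r j ^ nat (n j) * (?E - \<epsilon>) * v j"
        using pos_divide_less_eq[of "v j" ?b] vpos by blast
      hence bl: "?b < v j * r j ^ nat (n j) * (?E - \<epsilon>)"
        by (simp only: mult.commute mult.left_commute)
      have "(\<Sum>i\<in>UNIV. h i) = h j + (\<Sum>i\<in>UNIV - {j}. h i)"
        using sum.remove[of UNIV j h] by simp
      also have "\<dots> \<le> h j + (\<Sum>i\<in>UNIV - {j}. w i)"
        using sum_mono[OF hw] by simp
      also have "(\<Sum>i\<in>UNIV - {j}. w i) = (\<Sum>i\<in>UNIV. w i) - w j"
        using sum.remove[of UNIV j w] by simp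
      finally have "\<epsilon> * v0 + (\<Sum>i\<in>UNIV. h i) \<le> ?b + h j - w j" unfolding bdef by simp
      thus ?thesis using False hI[OF jI] bl w_pos[of j] by simp
    qed
    ultimately show ?thesis by simp
  qed
  show ?thesis using eps Vge finB bpos main by simp
qed

end
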